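(* The outage probability of the IRS-OMA user $d$ with 1-bit coding is $$P_d=\left[1-\frac{2}{\Gamma(Q)}\left(\frac{\gamma_{th_d}}{\rho\Omega_{sr}\Omega_{rd}}\right)^{Q/2}K_Q\!\left(2\sqrt{\frac{\gamma_{th_d}}{\rho\Omega_{sr}\Omega_{rd}}}\right)\right]^{P}.$$
   Context: Fix integers $P,Q\ge1$, $K=PQ$, and $\Omega_{sr},\Omega_{rd}>0$. Let $X_{d,1},\dots,X_{d,P}$ be i.i.d., each distributed as $\left|\sum_{k=1}^{Q} g_k h_k\right|^2$ with $g_1,\dots,g_Q,h_1,\dots,h_Q$ independent, $g_k\sim\mathcal{CN}(0,\Omega_{sr})$, $h_k\sim\mathcal{CN}(0,\Omega_{rd})$ (the cascade gain of the $p$-th block of $Q$ IRS elements). The SNR of user $d$ is $\gamma_d=\rho\max_{p}X_{d,p}$ with transmit SNR $\rho>0$. With target rate $R_{oma}>0$ and $\gamma_{th_d}=2^{R_{oma}}-1$, the outage probability is $P_d=\Pr(\gamma_d\le\gamma_{th_d})$. $K_\nu$ denotes the modified Bessel function of the second kind, $\Gamma$ the gamma function. *)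

theory Defs
  imports "HOL-Probability.Probability"
begin

definition besselK :: "real \<Rightarrow> real \<Rightarrow> real" where
  "besselK \<nu> z = (LBINT t:{0..}. exp (- z * cosh t) * cosh (\<nu> * t))"

text \<open>Density (w.r.t. Lebesgue measure on the complex plane) of the circularly
  symmetric complex Gaussian CN(0, Omega).\<close>
definition cn_density :: "real \<Rightarrow> complex \<Rightarrow> real" where
  "cn_density w z = exp (- ((cmod z) ^ 2) / w) / (pi * w)"

end

theory Submission
  imports Defs "HOL-Real_Asymp.Real_Asymp"
begin

lemma box_complex: "box l u = {z. Re l < Re z \<and> Re z < Re u \<and> Im l < Im z \<and> Im z < Im u}"
  by (auto simp: box_def Basis_complex_def inner_complex_def)

lemma meas_Complex[measurable]: "(\<lambda>(x,y). Complex x y) \<in> borel_measurable (lborel \<Otimes>\<^sub>M lborel)"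
proof -
  have "(\<lambda>(x,y). Complex x y) = (\<lambda>p. complex_of_real (fst p) + \<i> * complex_of_real (snd p))"
    by (auto simp: fun_eq_iff complex_eq_iff)
  then show ?thesis by simp
qed

lemma lborel_complex: "distr (lborel \<Otimes>\<^sub>M lborel) borel (\<lambda>(x,y). Complex x y) = (lborel :: complex measure)"
proof (rule lborel_eqI[symmetric])
  fix l u :: complex
  assume lu: "\<And>b. b \<in> Basis \<Longrightarrow> l \<bullet> b \<le> u \<bullet> b"
  have "Re l \<le> Re u" "Im l \<le> Im u" using lu[of 1] lu[of \<i>] by (auto simp: Basis_complex_def inner_complex_def)
  have pre: "(\<lambda>(x,y). Complex x y) -` box l u \<inter> space (lborel \<Otimes>\<^sub>M lborel) = {Re l<..<Re u} \<times> {Im l<..<Im u}"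
    by (auto simp: box_complex space_pair_measure)
  have "emeasure (distr (lborel \<Otimes>\<^sub>M lborel) borel (\<lambda>(x,y). Complex x y)) (box l u)
       = emeasure (lborel \<Otimes>\<^sub>M lborel) ({Re l<..<Re u} \<times> {Im l<..<Im u})"
    by (subst emeasure_distr) (auto simp: pre)
  also have "\<dots> = ennreal (Re u - Re l) * ennreal (Im u - Im l)"
    using \<open>Re l \<le> Re u\<close> \<open>Im l \<le> Im u\<close>
    by (subst lborel.emeasure_pair_measure_Times) auto
  also have "\<dots> = (\<Prod>b\<in>Basis. (u - l) \<bullet> b)"
    using \<open>Re l \<le> Re u\<close> \<open>Im l \<le> Im u\<close>
    by (simp add: Basis_complex_def inner_complex_def ennreal_mult)
  finally show "emeasure (distr (lborel \<Otimes>\<^sub>M lborel) borel (\<lambda>(x,y). Complex x y)) (box l u) = (\<Prod>b\<in>Basis. (u - l) \<bullet> b)" .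
qed simp

lemma nn_integral_complex:
  fixes f :: "complex \<Rightarrow> ennreal"
  assumes [measurable]: "f \<in> borel_measurable borel"
  shows "(\<integral>\<^sup>+z. f z \<partial>lborel) = (\<integral>\<^sup>+x. \<integral>\<^sup>+y. f (Complex x y) \<partial>lborel \<partial>lborel)"
proof -
  have "(\<integral>\<^sup>+z. f z \<partial>lborel) = (\<integral>\<^sup>+z. f z \<partial>distr (lborel \<Otimes>\<^sub>M lborel) borel (\<lambda>(x,y). Complex x y))"
    by (simp add: lborel_complex)
  also have "\<dots> = (\<integral>\<^sup>+p. f (case p of (x,y) \<Rightarrow> Complex x y) \<partial>(lborel \<Otimes>\<^sub>M lborel))"
    by (subst nn_integral_distr) auto
  also have "\<dots> = (\<integral>\<^sup>+x. \<integral>\<^sup>+y. f (Complex x y) \<partial>lborel \<partial>lborel)"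
    by (subst lborel.nn_integral_fst[symmetric]) auto
  finally show ?thesis .
qed

lemma measurable_Complex[measurable (raw)]:
  "f \<in> borel_measurable M \<Longrightarrow> g \<in> borel_measurable M \<Longrightarrow> (\<lambda>x. Complex (f x) (g x)) \<in> borel_measurable M"
proof -
  assume [measurable]: "f \<in> borel_measurable M" "g \<in> borel_measurable M"
  have "(\<lambda>x. Complex (f x) (g x)) = (\<lambda>x. complex_of_real (f x) + \<i> * complex_of_real (g x))"
    by (auto simp: fun_eq_iff complex_eq_iff)
  then show ?thesis by simp
qed

lemma swap_lborel:
  fixes f :: "real \<Rightarrow> real \<Rightarrow> ennreal"
  assumes "case_prod f \<in> borel_measurable (lborel \<Otimes>\<^sub>M lborel)"
  shows "(\<integral>\<^sup>+x. \<integral>\<^sup>+y. f x y \<partial>lborel \<partial>lborel) = (\<integral>\<^sup>+y. \<integral>\<^sup>+x. f x y \<partial>lborel \<partial>lborel)"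
  using lborel_pair.Fubini'[OF assms] by simp

lemma nn_integral_complex_mult:
  fixes f :: "complex \<Rightarrow> ennreal" and c :: complex
  assumes f[measurable]: "f \<in> borel_measurable borel" and c: "c \<noteq> 0"
  shows "(\<integral>\<^sup>+z. f z \<partial>lborel) = ennreal ((cmod c)\<^sup>2) * (\<integral>\<^sup>+z. f (c * z) \<partial>lborel)"
proof -
  obtain \<beta> \<delta> where cd: "c = Complex \<beta> \<delta>" by (metis complex.collapse)
  have cm: "(cmod c)\<^sup>2 = \<beta>\<^sup>2 + \<delta>\<^sup>2" by (simp add: cd cmod_power2)
  have prod: "c * Complex x y = Complex (\<beta>*x - \<delta>*y) (\<delta>*x + \<beta>*y)" for x y
    by (simp add: cd complex_eq_iff)
  have R: "(\<integral>\<^sup>+z. f (c * z) \<partial>lborel) = (\<integral>\<^sup>+x. \<integral>\<^sup>+y. f (Complex (\<beta>*x - \<delta>*y) (\<delta>*x + \<beta>*y)) \<partial>lborel \<partial>lborel)"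
    by (subst nn_integral_complex) (auto simp: prod)
  show ?thesis
  proof (cases "\<beta> = 0")
    case False
    let ?k = "(\<beta>\<^sup>2 + \<delta>\<^sup>2) / \<beta>"
    have k0: "?k \<noteq> 0" using False by (simp add: add_nonneg_eq_0_iff)
    have "(\<integral>\<^sup>+z. f z \<partial>lborel) = (\<integral>\<^sup>+u. \<integral>\<^sup>+v. f (Complex u v) \<partial>lborel \<partial>lborel)"
      by (rule nn_integral_complex) simp
    also have "\<dots> = (\<integral>\<^sup>+u. ennreal \<bar>?k\<bar> * \<integral>\<^sup>+y. f (Complex u (\<delta>*u/\<beta> + ?k * y)) \<partial>lborel \<partial>lborel)"
      by (intro nn_integral_cong nn_integral_real_affine[OF _ k0]) simp
    also have "\<dots> = ennreal \<bar>?k\<bar> * (\<integral>\<^sup>+u. \<integral>\<^sup>+y. f (Complex u (\<delta>*u/\<beta> + ?k * y)) \<partial>lborel \<partial>lborel)"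
      by (rule nn_integral_cmult) measurable
    also have "(\<integral>\<^sup>+u. \<integral>\<^sup>+y. f (Complex u (\<delta>*u/\<beta> + ?k * y)) \<partial>lborel \<partial>lborel)
        = (\<integral>\<^sup>+y. \<integral>\<^sup>+u. f (Complex u (\<delta>*u/\<beta> + ?k * y)) \<partial>lborel \<partial>lborel)"
      by (rule swap_lborel) measurable
    also have "\<dots> = (\<integral>\<^sup>+y. ennreal \<bar>\<beta>\<bar> * \<integral>\<^sup>+x. f (Complex (\<beta>*x - \<delta>*y) (\<delta>*x + \<beta>*y)) \<partial>lborel \<partial>lborel)"
    proof (intro nn_integral_cong)
      fix y
      have "(\<integral>\<^sup>+u. f (Complex u (\<delta>*u/\<beta> + ?k * y)) \<partial>lborel)
          = ennreal \<bar>\<beta>\<bar> * \<integral>\<^sup>+x. f (Complex (- \<delta>*y + \<beta>*x) (\<delta>*(- \<delta>*y + \<beta>*x)/\<beta> + ?k * y)) \<partial>lborel"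
        by (rule nn_integral_real_affine[OF _ False]) simp
      also have "(\<lambda>x. Complex (- \<delta>*y + \<beta>*x) (\<delta>*(- \<delta>*y + \<beta>*x)/\<beta> + ?k * y))
            = (\<lambda>x. Complex (\<beta>*x - \<delta>*y) (\<delta>*x + \<beta>*y))"
        using False by (auto simp: fun_eq_iff field_simps power2_eq_square)
      finally show "(\<integral>\<^sup>+u. f (Complex u (\<delta>*u/\<beta> + ?k * y)) \<partial>lborel)
          = ennreal \<bar>\<beta>\<bar> * \<integral>\<^sup>+x. f (Complex (\<beta>*x - \<delta>*y) (\<delta>*x + \<beta>*y)) \<partial>lborel" .
    qed
    also have "\<dots> = ennreal \<bar>\<beta>\<bar> * (\<integral>\<^sup>+y. \<integral>\<^sup>+x. f (Complex (\<beta>*x - \<delta>*y) (\<delta>*x + \<beta>*y)) \<partial>lborel \<partial>lborel)"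
      by (rule nn_integral_cmult) measurable
    also have "(\<integral>\<^sup>+y. \<integral>\<^sup>+x. f (Complex (\<beta>*x - \<delta>*y) (\<delta>*x + \<beta>*y)) \<partial>lborel \<partial>lborel)
        = (\<integral>\<^sup>+x. \<integral>\<^sup>+y. f (Complex (\<beta>*x - \<delta>*y) (\<delta>*x + \<beta>*y)) \<partial>lborel \<partial>lborel)"
      by (rule swap_lborel[symmetric]) measurable
    also have "ennreal \<bar>?k\<bar> * (ennreal \<bar>\<beta>\<bar> * X) = ennreal ((cmod c)\<^sup>2) * X" for X
    proof -
      have "\<bar>?k\<bar> * \<bar>\<beta>\<bar> = (cmod c)\<^sup>2" using False by (simp add: cm abs_div field_simps)
      then show ?thesis by (simp add: ennreal_mult'[symmetric] mult.assoc[symmetric])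
    qed
    finally show ?thesis using R by simp
  next
    case True
    then have d0: "\<delta> \<noteq> 0" using c cd by (auto simp: complex_eq_iff)
    have md0: "- \<delta> \<noteq> 0" using d0 by simp
    have "(\<integral>\<^sup>+z. f z \<partial>lborel) = (\<integral>\<^sup>+u. \<integral>\<^sup>+v. f (Complex u v) \<partial>lborel \<partial>lborel)"
      by (rule nn_integral_complex) simp
    also have "\<dots> = (\<integral>\<^sup>+u. ennreal \<bar>\<delta>\<bar> * \<integral>\<^sup>+x. f (Complex u (0 + \<delta> * x)) \<partial>lborel \<partial>lborel)"
      by (intro nn_integral_cong nn_integral_real_affine[OF _ d0]) simp
    also have "\<dots> = ennreal \<bar>\<delta>\<bar> * (\<integral>\<^sup>+u. \<integral>\<^sup>+x. f (Complex u (0 + \<delta> * x)) \<partial>lborel \<partial>lborel)"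
      by (rule nn_integral_cmult) measurable
    also have "(\<integral>\<^sup>+u. \<integral>\<^sup>+x. f (Complex u (0 + \<delta> * x)) \<partial>lborel \<partial>lborel)
        = (\<integral>\<^sup>+x. \<integral>\<^sup>+u. f (Complex u (0 + \<delta> * x)) \<partial>lborel \<partial>lborel)"
      by (rule swap_lborel) measurable
    also have "\<dots> = (\<integral>\<^sup>+x. ennreal \<bar>- \<delta>\<bar> * \<integral>\<^sup>+y. f (Complex (0 + - \<delta> * y) (0 + \<delta> * x)) \<partial>lborel \<partial>lborel)"
      by (intro nn_integral_cong nn_integral_real_affine[OF _ md0]) simp
    also have "\<dots> = (\<integral>\<^sup>+x. ennreal \<bar>\<delta>\<bar> * \<integral>\<^sup>+y. f (Complex (\<beta>*x - \<delta>*y) (\<delta>*x + \<beta>*y)) \<partial>lborel \<partial>lborel)"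
      using True by simp
    also have "\<dots> = ennreal \<bar>\<delta>\<bar> * (\<integral>\<^sup>+x. \<integral>\<^sup>+y. f (Complex (\<beta>*x - \<delta>*y) (\<delta>*x + \<beta>*y)) \<partial>lborel \<partial>lborel)"
      by (rule nn_integral_cmult) measurable
    also have "ennreal \<bar>\<delta>\<bar> * (ennreal \<bar>\<delta>\<bar> * X) = ennreal ((cmod c)\<^sup>2) * X" for X
    proof -
      have "\<bar>\<delta>\<bar> * \<bar>\<delta>\<bar> = (cmod c)\<^sup>2" using True cm by (simp add: power2_eq_square)
      then show ?thesis by (simp add: ennreal_mult'[symmetric] mult.assoc[symmetric])
    qed
    finally show ?thesis using R by simp
  qed
qed

lemma nn_integral_complex_plus:
  fixes f :: "complex \<Rightarrow> ennreal"
  assumes f[measurable]: "f \<in> borel_measurable borel"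
  shows "(\<integral>\<^sup>+z. f (s + z) \<partial>lborel) = (\<integral>\<^sup>+z. f z \<partial>lborel)"
proof -
  have "(\<integral>\<^sup>+z. f z \<partial>lborel) = (\<integral>\<^sup>+z. f z \<partial>distr lborel borel ((+) s))"
    by (simp add: lborel_distr_plus)
  also have "\<dots> = (\<integral>\<^sup>+z. f (s + z) \<partial>lborel)"
    by (subst nn_integral_distr) auto
  finally show ?thesis ..
qed

definition cnM :: "real \<Rightarrow> complex measure" where
  "cnM v = density lborel (\<lambda>z. ennreal (cn_density v z))"

lemma cn_density_nonneg: "v > 0 \<Longrightarrow> cn_density v z \<ge> 0"
  by (simp add: cn_density_def)

lemma borel_cn_density[measurable]: "cn_density v \<in> borel_measurable borel"
  unfolding cn_density_def by measurable

lemma cn_factor: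
  assumes "v > 0"
  shows "cn_density v z = normal_density 0 (sqrt (v/2)) (Re z) * normal_density 0 (sqrt (v/2)) (Im z)"
proof -
  have "sqrt (2 * pi * (sqrt (v/2))\<^sup>2) = sqrt (pi * v)" using assms by simp
  moreover have "sqrt (pi * v) * sqrt (pi * v) = pi * v" using assms by simp
  ultimately show ?thesis using assms
    by (simp add: cn_density_def normal_density_def cmod_power2 mult_exp_exp field_simps)
qed

lemma nn_integral_complex_prod:
  fixes f g :: "real \<Rightarrow> ennreal"
  assumes [measurable]: "f \<in> borel_measurable borel" "g \<in> borel_measurable borel"
  shows "(\<integral>\<^sup>+z. f (Re z) * g (Im z) \<partial>lborel) = (\<integral>\<^sup>+x. f x \<partial>lborel) * (\<integral>\<^sup>+y. g y \<partial>lborel)"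
proof -
  have "(\<integral>\<^sup>+z. f (Re z) * g (Im z) \<partial>lborel) = (\<integral>\<^sup>+x. \<integral>\<^sup>+y. f x * g y \<partial>lborel \<partial>lborel)"
    by (subst nn_integral_complex) auto
  also have "\<dots> = (\<integral>\<^sup>+x. f x * (\<integral>\<^sup>+y. g y \<partial>lborel) \<partial>lborel)"
    by (intro nn_integral_cong nn_integral_cmult) auto
  also have "\<dots> = (\<integral>\<^sup>+x. f x \<partial>lborel) * (\<integral>\<^sup>+y. g y \<partial>lborel)"
    by (rule nn_integral_multc) auto
  finally show ?thesis .
qed

lemma nn_integral_normal: "\<sigma> > 0 \<Longrightarrow> (\<integral>\<^sup>+x. ennreal (normal_density \<mu> \<sigma> x) \<partial>lborel) = 1"
  by (subst nn_integral_eq_integral) auto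

lemma nn_integral_cn: "v > 0 \<Longrightarrow> (\<integral>\<^sup>+z. ennreal (cn_density v z) \<partial>lborel) = 1"
proof -
  assume v: "v > 0"
  let ?n = "\<lambda>x. ennreal (normal_density 0 (sqrt (v/2)) x)"
  have "(\<integral>\<^sup>+z. ennreal (cn_density v z) \<partial>lborel) = (\<integral>\<^sup>+z. ?n (Re z) * ?n (Im z) \<partial>lborel)"
    using v by (simp add: cn_factor ennreal_mult)
  also have "\<dots> = (\<integral>\<^sup>+x. ?n x \<partial>lborel) * (\<integral>\<^sup>+x. ?n x \<partial>lborel)"
    by (rule nn_integral_complex_prod) auto
  finally show ?thesis using v by (simp add: nn_integral_normal)
qed

lemma prob_space_cnM: "v > 0 \<Longrightarrow> prob_space (cnM v)"
  unfolding cnM_def by (rule prob_spaceI) (simp add: emeasure_density nn_integral_cn)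

lemma space_cnM[simp]: "space (cnM v) = UNIV" and sets_cnM[simp]: "sets (cnM v) = sets borel"
  by (simp_all add: cnM_def)

lemma conv_cn:
  assumes a: "a > 0" and b: "b > 0"
  shows "(\<integral>\<^sup>+w. ennreal (cn_density a (z - w) * cn_density b w) \<partial>lborel) = ennreal (cn_density (a + b) z)"
proof -
  let ?na = "normal_density 0 (sqrt (a/2))" and ?nb = "normal_density 0 (sqrt (b/2))"
  have c: "(\<lambda>x. \<integral>\<^sup>+y. ennreal (?na (x - y) * ?nb y) \<partial>lborel) = (\<lambda>x. ennreal (normal_density 0 (sqrt ((sqrt (a/2))\<^sup>2 + (sqrt (b/2))\<^sup>2)) x))"
    using conv_normal_density_zero_mean[of "sqrt (a/2)" "sqrt (b/2)"] a b by simp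
  have e: "sqrt (a/2 + b/2) = sqrt ((a+b)/2)" by (simp add: add_divide_distrib)
  have "(\<integral>\<^sup>+w. ennreal (cn_density a (z - w) * cn_density b w) \<partial>lborel)
      = (\<integral>\<^sup>+w. ennreal (?na (Re z - Re w) * ?nb (Re w)) * ennreal (?na (Im z - Im w) * ?nb (Im w)) \<partial>lborel)"
    using a b by (intro nn_integral_cong) (simp add: cn_factor ennreal_mult[symmetric] ac_simps)
  also have "\<dots> = (\<integral>\<^sup>+x. ennreal (?na (Re z - x) * ?nb x) \<partial>lborel) * (\<integral>\<^sup>+y. ennreal (?na (Im z - y) * ?nb y) \<partial>lborel)"
    by (rule nn_integral_complex_prod) auto
  also have "\<dots> = ennreal (cn_density (a + b) z)"
    using fun_cong[OF c, of "Re z"] fun_cong[OF c, of "Im z"] a b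
    by (simp add: e cn_factor ennreal_mult)
  finally show ?thesis .
qed

lemma exp_tail:
  assumes v: "v > 0"
  shows "(\<integral>\<^sup>+t. ennreal (exp (- t / v) / v) * indicator {s..} t \<partial>lborel) = ennreal (exp (- s / v))"
proof -
  have "(\<integral>\<^sup>+t. ennreal (exp (- t / v) / v) * indicator {s..} t \<partial>lborel) = ennreal (0 - (- exp (- s / v)))"
  proof (rule nn_integral_FTC_atLeast)
    show "(\<lambda>t. exp (- t / v) / v) \<in> borel_measurable borel" by measurable
    show "((\<lambda>t. - exp (- t / v)) has_real_derivative exp (- t / v) / v) (at t)" for t
      using v by (auto intro!: derivative_eq_intros simp: field_simps)
    show "0 \<le> exp (- t / v) / v" for t using v by simp
    show "((\<lambda>t. - exp (- t / v)) \<longlongrightarrow> 0) at_top" using v by real_asymp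
  qed
  then show ?thesis by simp
qed

lemma emeasure_cball_complex: "r \<ge> 0 \<Longrightarrow> emeasure lborel (cball (c::complex) r) = ennreal (pi * r\<^sup>2)"
  by (simp add: emeasure_cball eval_unit_ball_vol)

lemma cn_radial:
  assumes v: "v > 0" and x: "x \<ge> 0"
  shows "emeasure (cnM v) {z. (cmod z)\<^sup>2 \<le> x} = ennreal (1 - exp (- x / v))"
proof -
  define A where "A = {z::complex. (cmod z)\<^sup>2 \<le> x}"
  have A[measurable]: "A \<in> sets borel" unfolding A_def by measurable
  define h where "h = (\<lambda>z::complex. \<lambda>t::real. ennreal (exp (- t / v) / (pi * v\<^sup>2)) * indicator {z. (cmod z)\<^sup>2 \<le> x \<and> (cmod z)\<^sup>2 \<le> t} z)"
  have hm[measurable]: "case_prod h \<in> borel_measurable (lborel \<Otimes>\<^sub>M lborel)"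
    unfolding h_def by measurable
  have 1: "ennreal (cn_density v z) * indicator A z = (\<integral>\<^sup>+t. h z t \<partial>lborel)" for z
  proof -
    have "(\<integral>\<^sup>+t. h z t \<partial>lborel) = (\<integral>\<^sup>+t. (ennreal (1 / (pi * v)) * indicator A z) * (ennreal (exp (- t / v) / v) * indicator {(cmod z)\<^sup>2..} t) \<partial>lborel)"
      using v by (intro nn_integral_cong) (auto simp: h_def A_def ennreal_mult[symmetric] power2_eq_square split: split_indicator)
    also have "\<dots> = (ennreal (1 / (pi * v)) * indicator A z) * (\<integral>\<^sup>+t. ennreal (exp (- t / v) / v) * indicator {(cmod z)\<^sup>2..} t \<partial>lborel)"
      by (rule nn_integral_cmult) measurable
    also have "\<dots> = ennreal (cn_density v z) * indicator A z"
      using v by (subst exp_tail[OF v]) (simp add: cn_density_def ennreal_mult[symmetric] split: split_indicator)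
    finally show ?thesis ..
  qed
  have 3: "(\<integral>\<^sup>+z. h z t \<partial>lborel) = ennreal (exp (- t / v) * min x t / v\<^sup>2) * indicator {0..} t" for t
  proof (cases "t \<ge> 0")
    case True
    have set: "{z. (cmod z)\<^sup>2 \<le> x \<and> (cmod z)\<^sup>2 \<le> t} = cball 0 (sqrt (min x t))"
    proof -
      have "(cmod z)\<^sup>2 \<le> min x t \<longleftrightarrow> cmod z \<le> sqrt (min x t)" for z
        by (metis abs_norm_cancel real_sqrt_abs real_sqrt_le_iff)
      then show ?thesis by (simp add: dist_norm set_eq_iff)
    qed
    have "(\<integral>\<^sup>+z. h z t \<partial>lborel) = ennreal (exp (- t / v) / (pi * v\<^sup>2)) * emeasure lborel {z. (cmod z)\<^sup>2 \<le> x \<and> (cmod z)\<^sup>2 \<le> t}"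
      unfolding h_def by (rule nn_integral_cmult_indicator) measurable
    also have "\<dots> = ennreal (exp (- t / v) * min x t / v\<^sup>2)"
      using True x v by (simp add: set emeasure_cball_complex ennreal_mult[symmetric])
    finally show ?thesis using True by simp
  next
    case False
    have "{z. (cmod z)\<^sup>2 \<le> x \<and> (cmod z)\<^sup>2 \<le> t} = {}"
      using False by (auto intro: order_trans[OF zero_le_power2])
    then show ?thesis using False by (simp add: h_def)
  qed
  have 4: "(\<integral>\<^sup>+t. ennreal (exp (- t / v) * min x t / v\<^sup>2) * indicator {0..} t \<partial>lborel) = ennreal (1 - exp (- x / v))"
  proof -
    have "(\<integral>\<^sup>+t. ennreal (exp (- t / v) * min x t / v\<^sup>2) * indicator {0..} t \<partial>lborel)
       = (\<integral>\<^sup>+t. ennreal (erlang_density 1 (1/v) t) * indicator {..x} t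
             + ennreal (x / v) * (ennreal (exp (- t / v) / v) * indicator {x..} t) \<partial>lborel)"
    proof (rule nn_integral_cong_AE)
      show "AE t in lborel. ennreal (exp (- t / v) * min x t / v\<^sup>2) * indicator {0..} t =
          ennreal (erlang_density 1 (1/v) t) * indicator {..x} t + ennreal (x / v) * (ennreal (exp (- t / v) / v) * indicator {x..} t)"
        using AE_lborel_singleton[of x]
      proof eventually_elim
        case (elim t)
        show ?case
        proof (cases "t < 0")
          case True then show ?thesis using x by (simp add: erlang_density_def)
        next
          case False
          show ?thesis
          proof (cases "t < x")
            case True then show ?thesis using False v
              by (simp add: erlang_density_def field_simps power2_eq_square)
          next
            case f2: False
            then show ?thesis using False v elim x
              by (simp add: erlang_density_def field_simps power2_eq_square ennreal_mult[symmetric])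
          qed
        qed
      qed
    qed
    also have "\<dots> = (\<integral>\<^sup>+t. ennreal (erlang_density 1 (1/v) t) * indicator {..x} t \<partial>lborel)
             + ennreal (x / v) * (\<integral>\<^sup>+t. ennreal (exp (- t / v) / v) * indicator {x..} t \<partial>lborel)"
      by (subst nn_integral_add) (auto simp: nn_integral_cmult)
    also have "\<dots> = ennreal (erlang_CDF 1 (1/v) x) + ennreal (x / v) * ennreal (exp (- x / v))"
      using v by (subst exp_tail[OF v]) (simp add: nn_integral_erlang_density)
    also have "\<dots> = ennreal (1 - exp (- x / v))"
    proof -
      have "erlang_CDF 1 (1/v) x = 1 - (exp (- x / v) + x / v * exp (- x / v))"
        using x v by (simp add: erlang_CDF_def)
      moreover have "0 \<le> erlang_CDF 1 (1/v) x" using v by simp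
      ultimately show ?thesis using x v
        by (simp add: ennreal_mult[symmetric] ennreal_plus[symmetric] del: ennreal_plus)
    qed
    finally show ?thesis .
  qed
  have "emeasure (cnM v) {z. (cmod z)\<^sup>2 \<le> x} = (\<integral>\<^sup>+z. ennreal (cn_density v z) * indicator A z \<partial>lborel)"
    unfolding cnM_def A_def by (subst emeasure_density) auto
  also have "\<dots> = (\<integral>\<^sup>+z. \<integral>\<^sup>+t. h z t \<partial>lborel \<partial>lborel)"
    by (simp add: 1)
  also have "\<dots> = (\<integral>\<^sup>+t. \<integral>\<^sup>+z. h z t \<partial>lborel \<partial>lborel)"
  proof -
    have P: "pair_sigma_finite (lborel :: complex measure) (lborel :: real measure)"
      by (simp add: pair_sigma_finite_def sigma_finite_lborel)
    show ?thesis using pair_sigma_finite.Fubini'[OF P hm] by simp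
  qed
  also have "\<dots> = (\<integral>\<^sup>+t. ennreal (exp (- t / v) * min x t / v\<^sup>2) * indicator {0..} t \<partial>lborel)"
    by (simp only: 3)
  also have "\<dots> = ennreal (1 - exp (- x / v))"
    by (rule 4)
  finally show ?thesis .
qed

lemma sets_cnM_cong[measurable_cong]: "sets (cnM v) = sets borel" by simp

lemma cn_scale_eq:
  assumes "\<Omega> > 0" "c \<noteq> 0"
  shows "(cmod c)\<^sup>2 * cn_density (\<Omega> * (cmod c)\<^sup>2) (c * z) = cn_density \<Omega> z"
  using assms by (simp add: cn_density_def norm_mult power_mult_distrib field_simps)

lemma scale_cn:
  fixes F :: "complex \<Rightarrow> ennreal"
  assumes \<Omega>: "\<Omega> > 0" and c: "c \<noteq> 0" and F[measurable]: "F \<in> borel_measurable borel"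
  shows "(\<integral>\<^sup>+y. F (y * c) \<partial>cnM \<Omega>) = (\<integral>\<^sup>+w. ennreal (cn_density (\<Omega> * (cmod c)\<^sup>2) w) * F w \<partial>lborel)"
proof -
  have "(\<integral>\<^sup>+w. ennreal (cn_density (\<Omega> * (cmod c)\<^sup>2) w) * F w \<partial>lborel)
      = ennreal ((cmod c)\<^sup>2) * (\<integral>\<^sup>+z. ennreal (cn_density (\<Omega> * (cmod c)\<^sup>2) (c * z)) * F (c * z) \<partial>lborel)"
    by (rule nn_integral_complex_mult[OF _ c]) measurable
  also have "\<dots> = (\<integral>\<^sup>+z. ennreal ((cmod c)\<^sup>2) * (ennreal (cn_density (\<Omega> * (cmod c)\<^sup>2) (c * z)) * F (c * z)) \<partial>lborel)"
    by (rule nn_integral_cmult[symmetric]) measurable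
  also have "\<dots> = (\<integral>\<^sup>+z. ennreal (cn_density \<Omega> z) * F (z * c) \<partial>lborel)"
  proof (intro nn_integral_cong)
    fix z
    have "ennreal ((cmod c)\<^sup>2) * ennreal (cn_density (\<Omega> * (cmod c)\<^sup>2) (c * z)) = ennreal (cn_density \<Omega> z)"
      using cn_scale_eq[OF \<Omega> c, of z] by (simp add: ennreal_mult'[symmetric])
    then show "ennreal ((cmod c)\<^sup>2) * (ennreal (cn_density (\<Omega> * (cmod c)\<^sup>2) (c * z)) * F (c * z)) = ennreal (cn_density \<Omega> z) * F (z * c)"
      by (simp add: mult.assoc[symmetric] mult.commute[of z c])
  qed
  also have "\<dots> = (\<integral>\<^sup>+y. F (y * c) \<partial>cnM \<Omega>)"
    unfolding cnM_def by (subst nn_integral_density) auto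
  finally show ?thesis ..
qed

lemma sum_cn_PiM:
  fixes J :: "'i set" and b :: "'i \<Rightarrow> complex" and F :: "complex \<Rightarrow> ennreal"
  assumes J: "finite J" and \<Omega>: "\<Omega> > 0" and F: "F \<in> borel_measurable borel"
  shows "(\<integral>\<^sup>+a. F (\<Sum>j\<in>J. a j * b j) \<partial>PiM J (\<lambda>_. cnM \<Omega>)) =
    (if (\<Sum>j\<in>J. (cmod (b j))\<^sup>2) = 0 then F 0
     else \<integral>\<^sup>+z. ennreal (cn_density (\<Omega> * (\<Sum>j\<in>J. (cmod (b j))\<^sup>2)) z) * F z \<partial>lborel)"
  using J F
proof (induction J arbitrary: F rule: finite_induct)
  case empty
  interpret prob_space "PiM {} (\<lambda>_. cnM \<Omega>)"
    by (rule prob_space_PiM) (simp add: prob_space_cnM \<Omega>)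
  show ?case by (simp add: emeasure_space_1)
next
  case (insert i J)
  note F[measurable] = insert.prems
  interpret product_sigma_finite "\<lambda>_. cnM \<Omega>"
    unfolding product_sigma_finite_def
    using prob_space_cnM[OF \<Omega>] by (simp add: prob_space_imp_sigma_finite)
  interpret cn: prob_space "cnM \<Omega>" by (rule prob_space_cnM[OF \<Omega>])
  define T where "T = (\<Sum>j\<in>J. (cmod (b j))\<^sup>2)"
  define t where "t = (cmod (b i))\<^sup>2"
  have T0: "T \<ge> 0" unfolding T_def by (simp add: sum_nonneg)
  have t0: "t \<ge> 0" unfolding t_def by simp
  have TT: "(\<Sum>j\<in>insert i J. (cmod (b j))\<^sup>2) = t + T" using insert by (simp add: T_def t_def)
  define G where "G = (\<lambda>s. \<integral>\<^sup>+y. F (s + y * b i) \<partial>cnM \<Omega>)"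
  have G[measurable]: "G \<in> borel_measurable borel"
    unfolding G_def by measurable
  have "(\<integral>\<^sup>+a. F (\<Sum>j\<in>insert i J. a j * b j) \<partial>PiM (insert i J) (\<lambda>_. cnM \<Omega>))
     = (\<integral>\<^sup>+x. \<integral>\<^sup>+y. F (\<Sum>j\<in>insert i J. (x(i := y)) j * b j) \<partial>cnM \<Omega> \<partial>PiM J (\<lambda>_. cnM \<Omega>))"
    by (rule product_nn_integral_insert) (use insert in \<open>auto\<close>)
  also have "\<dots> = (\<integral>\<^sup>+x. G (\<Sum>j\<in>J. x j * b j) \<partial>PiM J (\<lambda>_. cnM \<Omega>))"
  proof (intro nn_integral_cong)
    fix x
    have "(\<Sum>j\<in>J. (x(i := y)) j * b j) = (\<Sum>j\<in>J. x j * b j)" for y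
      using insert by (intro sum.cong) auto
    then show "(\<integral>\<^sup>+y. F (\<Sum>j\<in>insert i J. (x(i := y)) j * b j) \<partial>cnM \<Omega>) = G (\<Sum>j\<in>J. x j * b j)"
      using insert by (simp add: G_def add.commute)
  qed
  also have "\<dots> = (if T = 0 then G 0 else \<integral>\<^sup>+z. ennreal (cn_density (\<Omega> * T) z) * G z \<partial>lborel)"
    unfolding T_def by (rule insert.IH) (rule G)
  also have "\<dots> = (if t + T = 0 then F 0
     else \<integral>\<^sup>+z. ennreal (cn_density (\<Omega> * (t + T)) z) * F z \<partial>lborel)"
  proof (cases "t = 0")
    case True
    then have bi: "b i = 0" by (simp add: t_def)
    have Gs: "G s = F s" for s
      using cn.emeasure_space_1 by (simp add: G_def bi)
    show ?thesis using True by (simp add: Gs)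
  next
    case False
    then have bi: "b i \<noteq> 0" by (auto simp: t_def)
    have Gs: "G s = (\<integral>\<^sup>+w. ennreal (cn_density (\<Omega> * t) w) * F (s + w) \<partial>lborel)" for s
      unfolding G_def t_def by (rule scale_cn[OF \<Omega> bi]) measurable
    have tT: "t + T \<noteq> 0" using False T0 t0 by simp
    show ?thesis
    proof (cases "T = 0")
      case True
      then show ?thesis using tT by (simp add: Gs)
    next
      case Tn: False
      have pos: "\<Omega> * t > 0" "\<Omega> * T > 0" using False Tn t0 T0 \<Omega> by auto
      have Gs2: "G s = (\<integral>\<^sup>+w. ennreal (cn_density (\<Omega> * t) (w - s)) * F w \<partial>lborel)" for s
        unfolding Gs using nn_integral_complex_plus[of "\<lambda>w. ennreal (cn_density (\<Omega> * t) (w - s)) * F w" s]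
        by simp
      have "(\<integral>\<^sup>+z. ennreal (cn_density (\<Omega> * T) z) * G z \<partial>lborel)
          = (\<integral>\<^sup>+z. \<integral>\<^sup>+w. ennreal (cn_density (\<Omega> * T) z) * (ennreal (cn_density (\<Omega> * t) (w - z)) * F w) \<partial>lborel \<partial>lborel)"
        by (intro nn_integral_cong) (simp add: Gs2 nn_integral_cmult[symmetric])
      also have "\<dots> = (\<integral>\<^sup>+w. \<integral>\<^sup>+z. ennreal (cn_density (\<Omega> * T) z) * (ennreal (cn_density (\<Omega> * t) (w - z)) * F w) \<partial>lborel \<partial>lborel)"
      proof -
        have P: "pair_sigma_finite (lborel :: complex measure) (lborel :: complex measure)"
          by (simp add: pair_sigma_finite_def sigma_finite_lborel)
        show ?thesis by (rule pair_sigma_finite.Fubini'[OF P, symmetric]) measurable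
      qed
      also have "\<dots> = (\<integral>\<^sup>+w. (\<integral>\<^sup>+z. ennreal (cn_density (\<Omega> * t) (w - z) * cn_density (\<Omega> * T) z) \<partial>lborel) * F w \<partial>lborel)"
      proof (intro nn_integral_cong)
        fix w
        have pw: "ennreal (cn_density (\<Omega> * T) z) * (ennreal (cn_density (\<Omega> * t) (w - z)) * F w) =
             ennreal (cn_density (\<Omega> * t) (w - z) * cn_density (\<Omega> * T) z) * F w" for z
          using pos by (simp add: ennreal_mult cn_density_nonneg ac_simps)
        show "(\<integral>\<^sup>+z. ennreal (cn_density (\<Omega> * T) z) * (ennreal (cn_density (\<Omega> * t) (w - z)) * F w) \<partial>lborel) =
          (\<integral>\<^sup>+z. ennreal (cn_density (\<Omega> * t) (w - z) * cn_density (\<Omega> * T) z) \<partial>lborel) * F w"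
          unfolding pw by (rule nn_integral_multc) measurable
      qed
      also have "\<dots> = (\<integral>\<^sup>+w. ennreal (cn_density (\<Omega> * t + \<Omega> * T) w) * F w \<partial>lborel)"
      proof -
        show ?thesis using pos by (simp add: conv_cn)
      qed
      finally show ?thesis using tT Tn by (simp add: distrib_left)
    qed
  qed
  finally show ?case using TT by simp
qed

lemma SUP_ind_ennreal:
  assumes "incseq A"
  shows "(SUP n. indicator (A n) x :: ennreal) = indicator (\<Union>n. A n) x"
proof (cases "x \<in> (\<Union>n. A n)")
  case True
  then obtain m where m: "x \<in> A m" by auto
  have "(SUP n. indicator (A n) x :: ennreal) = 1"
  proof (rule antisym)
    show "(SUP n. indicator (A n) x :: ennreal) \<le> 1" by (rule SUP_least) (simp split: split_indicator)
    have "(1::ennreal) = indicator (A m) x" using m by simp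
    also have "\<dots> \<le> (SUP n. indicator (A n) x :: ennreal)" by (rule SUP_upper) simp
    finally show "1 \<le> (SUP n. indicator (A n) x :: ennreal)" .
  qed
  then show ?thesis using True by simp
next
  case False
  then show ?thesis by simp
qed

lemma nn_subst_exp:
  fixes f :: "real \<Rightarrow> ennreal"
  assumes f[measurable]: "f \<in> borel_measurable borel" and \<beta>: "\<beta> > 0"
  shows "(\<integral>\<^sup>+t. f t * indicator {0<..} t \<partial>lborel) = (\<integral>\<^sup>+s. f (\<beta> * exp s) * ennreal (\<beta> * exp s) \<partial>lborel)"
proof -
  define A where "A = (\<lambda>n::nat. {\<beta> * exp (- real n - 1) .. \<beta> * exp (real n + 1)})"
  define B where "B = (\<lambda>n::nat. {- real n - 1 .. real n + 1})"
  have incA: "incseq A" unfolding A_def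
    by (intro monoI) (use \<beta> in auto)
  have incB: "incseq B" unfolding B_def
    by (intro monoI) auto
  have UA: "(\<Union>n. A n) = {0<..}"
  proof (intro equalityI subsetI)
    fix t assume "t \<in> (\<Union>n. A n)" then show "t \<in> {0<..}" using \<beta> by (auto simp: A_def intro: less_le_trans[rotated])
  next
    fix t :: real assume "t \<in> {0<..}"
    then have t: "t > 0" by simp
    obtain n :: nat where n: "\<bar>ln (t / \<beta>)\<bar> \<le> real n" using real_arch_simple by blast
    have "- real n - 1 \<le> ln (t / \<beta>)" "ln (t / \<beta>) \<le> real n + 1" using n by auto
    then have "exp (- real n - 1) \<le> t / \<beta>" "t / \<beta> \<le> exp (real n + 1)"
      using t \<beta> by (metis divide_pos_pos exp_ln exp_le_cancel_iff)+
    then show "t \<in> (\<Union>n. A n)" using \<beta> by (auto simp: A_def field_simps)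
  qed
  have UB: "(\<Union>n. B n) = UNIV"
  proof (intro equalityI subsetI)
    fix s :: real
    obtain n :: nat where "\<bar>s\<bar> \<le> real n" using real_arch_simple by blast
    then have "- real n - 1 \<le> s \<and> s \<le> real n + 1" by auto
    then show "s \<in> (\<Union>n. B n)" by (auto simp: B_def)
  qed simp
  have step: "(\<integral>\<^sup>+t. f t * indicator (A n) t \<partial>lborel) = (\<integral>\<^sup>+s. f (\<beta> * exp s) * ennreal (\<beta> * exp s) * indicator (B n) s \<partial>lborel)" for n
    unfolding A_def B_def
    by (rule nn_integral_substitution_aux[where g="\<lambda>s. \<beta> * exp s" and g'="\<lambda>s. \<beta> * exp s", simplified])
       (use \<beta> in \<open>auto intro!: derivative_eq_intros continuous_intros\<close>)
  have "(\<integral>\<^sup>+t. f t * indicator {0<..} t \<partial>lborel) = (\<integral>\<^sup>+t. (SUP n. f t * indicator (A n) t) \<partial>lborel)"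
    by (simp add: SUP_mult_left_ennreal[symmetric] SUP_ind_ennreal[OF incA] UA)
  also have "\<dots> = (SUP n. \<integral>\<^sup>+t. f t * indicator (A n) t \<partial>lborel)"
  proof (rule nn_integral_monotone_convergence_SUP)
    show "incseq (\<lambda>n t. f t * indicator (A n) t)"
      using incA by (auto simp: incseq_def le_fun_def intro!: mult_left_mono split: split_indicator)
    show "(\<lambda>t. f t * indicator (A n) t) \<in> borel_measurable lborel" for n
      unfolding A_def by measurable
  qed
  also have "\<dots> = (SUP n. \<integral>\<^sup>+s. f (\<beta> * exp s) * ennreal (\<beta> * exp s) * indicator (B n) s \<partial>lborel)"
    by (simp add: step)
  also have "\<dots> = (\<integral>\<^sup>+s. (SUP n. f (\<beta> * exp s) * ennreal (\<beta> * exp s) * indicator (B n) s) \<partial>lborel)"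
  proof (rule nn_integral_monotone_convergence_SUP[symmetric])
    show "incseq (\<lambda>n s. f (\<beta> * exp s) * ennreal (\<beta> * exp s) * indicator (B n) s)"
      using incB by (auto simp: incseq_def le_fun_def intro!: mult_left_mono split: split_indicator)
    show "(\<lambda>s. f (\<beta> * exp s) * ennreal (\<beta> * exp s) * indicator (B n) s) \<in> borel_measurable lborel" for n
      unfolding B_def by measurable
  qed
  also have "\<dots> = (\<integral>\<^sup>+s. f (\<beta> * exp s) * ennreal (\<beta> * exp s) \<partial>lborel)"
    by (simp add: SUP_mult_left_ennreal[symmetric] SUP_ind_ennreal[OF incB] UB)
  finally show ?thesis .
qed

lemma bessel_alg:
  fixes l c s :: real and k :: nat
  assumes l: "l > 0" and c: "c > 0"
  defines "a \<equiv> l * c" and "\<beta> \<equiv> sqrt (c / l)"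
  shows "erlang_density k l (\<beta> * exp s) * exp (- c / (\<beta> * exp s)) * (\<beta> * exp s)
       = a powr (real (Suc k) / 2) / fact k * (exp (real (Suc k) * s) * exp (- (2 * sqrt a) * cosh s))"
proof -
  have b0: "\<beta> > 0" using l c by (simp add: \<beta>_def)
  have lb: "l * \<beta> = sqrt a"
  proof -
    have "l * \<beta> = (l / sqrt l) * sqrt c" using l by (simp add: \<beta>_def real_sqrt_divide)
    also have "\<dots> = sqrt l * sqrt c" using l by (simp add: real_div_sqrt)
    finally show ?thesis by (simp add: a_def real_sqrt_mult)
  qed
  have cb: "c / \<beta> = sqrt a"
  proof -
    have "c / \<beta> = (c / sqrt c) * sqrt l" using c l by (simp add: \<beta>_def real_sqrt_divide)
    also have "\<dots> = sqrt l * sqrt c" using c by (simp add: real_div_sqrt)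
    finally show ?thesis by (simp add: a_def real_sqrt_mult)
  qed
  let ?t = "\<beta> * exp s"
  have t0: "?t > 0" using b0 by simp
  have 1: "erlang_density k l ?t * ?t = (l * ?t) ^ Suc k / fact k * exp (- l * ?t)"
    using t0 by (simp add: erlang_density_def power_mult_distrib field_simps)
  have 2: "(l * ?t) ^ Suc k = a powr (real (Suc k) / 2) * exp (real (Suc k) * s)"
  proof -
    have "(l * ?t) ^ Suc k = sqrt a ^ Suc k * exp s ^ Suc k" using lb by (simp add: mult.assoc[symmetric] power_mult_distrib)
    also have "sqrt a ^ Suc k = a powr (real (Suc k) / 2)"
    proof -
      have a0: "a > 0" using l c by (simp add: a_def)
      have "a powr (real (Suc k) / 2) = sqrt (a powr real (Suc k))"
        using a0 by (intro powr_half_sqrt_powr) simp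
      also have "\<dots> = sqrt (a ^ Suc k)" using a0 powr_realpow[OF a0, of "Suc k"] by (simp only:)
      also have "\<dots> = sqrt a ^ Suc k" by (rule real_sqrt_power)
      finally show ?thesis ..
    qed
    also have "exp s ^ Suc k = exp (real (Suc k) * s)" by (rule exp_of_nat_mult[symmetric])
    finally show ?thesis .
  qed
  have 3: "exp (- l * ?t) * exp (- c / ?t) = exp (- (2 * sqrt a) * cosh s)"
  proof -
    have e1: "l * ?t = sqrt a * exp s" using lb by (simp only: mult.assoc[symmetric])
    have e2: "c / ?t = sqrt a * exp (- s)"
    proof -
      have "c / ?t = (c / \<beta>) / exp s" by simp
      also have "\<dots> = sqrt a * exp (- s)" unfolding cb by (simp add: exp_minus divide_inverse)
      finally show ?thesis .
    qed
    have e3: "sqrt a * exp s + sqrt a * exp (- s) = 2 * sqrt a * cosh s"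
      by (simp add: cosh_field_def distrib_left)
    have "exp (- l * ?t) * exp (- c / ?t) = exp (- (l * ?t + c / ?t))"
      by (simp add: mult_exp_exp)
    also have "\<dots> = exp (- (2 * sqrt a) * cosh s)" by (simp only: e1 e2 e3) simp
    finally show ?thesis .
  qed
  have "erlang_density k l ?t * exp (- c / ?t) * ?t = (erlang_density k l ?t * ?t) * exp (- c / ?t)"
    by (simp only: ac_simps)
  also have "\<dots> = (l * ?t) ^ Suc k / fact k * (exp (- l * ?t) * exp (- c / ?t))"
    by (simp only: 1)
  also have "\<dots> = a powr (real (Suc k) / 2) / fact k * (exp (real (Suc k) * s) * exp (- (2 * sqrt a) * cosh s))"
    by (simp only: 2 3) simp
  finally show ?thesis .
qed

lemma borel_cosh[measurable]: "(cosh :: real \<Rightarrow> real) \<in> borel_measurable borel"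
  by (intro borel_measurable_continuous_onI continuous_intros)

lemma sym_split:
  fixes g :: "real \<Rightarrow> real"
  assumes [measurable]: "g \<in> borel_measurable borel" and g0: "\<And>s. g s \<ge> 0"
  shows "(\<integral>\<^sup>+s. ennreal (g s) \<partial>lborel) = (\<integral>\<^sup>+s. ennreal (g s + g (- s)) * indicator {0..} s \<partial>lborel)"
proof -
  have "(\<integral>\<^sup>+s. ennreal (g s) \<partial>lborel) = (\<integral>\<^sup>+s. ennreal (g s) * indicator {0..} s + ennreal (g s) * indicator {..<0} s \<partial>lborel)"
    by (intro nn_integral_cong) (simp split: split_indicator)
  also have "\<dots> = (\<integral>\<^sup>+s. ennreal (g s) * indicator {0..} s \<partial>lborel) + (\<integral>\<^sup>+s. ennreal (g s) * indicator {..<0} s \<partial>lborel)"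
    by (rule nn_integral_add) auto
  also have "(\<integral>\<^sup>+s. ennreal (g s) * indicator {..<0} s \<partial>lborel) = (\<integral>\<^sup>+s. ennreal (g (- s)) * indicator {0..} s \<partial>lborel)"
  proof -
    have "(\<integral>\<^sup>+s. ennreal (g s) * indicator {..<0} s \<partial>lborel) = ennreal \<bar>-1\<bar> * (\<integral>\<^sup>+s. ennreal (g (0 + -1 * s)) * indicator {..<0} (0 + -1 * s) \<partial>lborel)"
      by (rule nn_integral_real_affine) auto
    also have "\<dots> = (\<integral>\<^sup>+s. ennreal (g (- s)) * indicator {0<..} s \<partial>lborel)"
      by (simp add: indicator_def)
    also have "\<dots> = (\<integral>\<^sup>+s. ennreal (g (- s)) * indicator {0..} s \<partial>lborel)"
      by (intro nn_integral_cong_AE) (use AE_lborel_singleton[of 0] in \<open>auto split: split_indicator\<close>)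
    finally show ?thesis .
  qed
  also have "(\<integral>\<^sup>+s. ennreal (g s) * indicator {0..} s \<partial>lborel) + (\<integral>\<^sup>+s. ennreal (g (- s)) * indicator {0..} s \<partial>lborel)
      = (\<integral>\<^sup>+s. ennreal (g s) * indicator {0..} s + ennreal (g (- s)) * indicator {0..} s \<partial>lborel)"
    by (rule nn_integral_add[symmetric]) auto
  also have "\<dots> = (\<integral>\<^sup>+s. ennreal (g s + g (- s)) * indicator {0..} s \<partial>lborel)"
    by (intro nn_integral_cong) (simp add: g0 split: split_indicator)
  finally show ?thesis .
qed

lemma erlang_bessel:
  fixes l c :: real and Q :: nat
  assumes l: "l > 0" and c: "c > 0" and Q: "Q \<ge> 1"
  shows "(\<integral>\<^sup>+t. ennreal (erlang_density (Q - 1) l t * exp (- c / t)) \<partial>lborel)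
       = ennreal (2 / Gamma (real Q) * (l * c) powr (real Q / 2) * besselK (real Q) (2 * sqrt (l * c)))"
proof -
  define k where "k = Q - 1"
  have Qk: "Q = Suc k" using Q by (simp add: k_def)
  define a where "a = l * c"
  define \<beta> where "\<beta> = sqrt (c / l)"
  define z where "z = 2 * sqrt a"
  have a0: "a > 0" using l c by (simp add: a_def)
  have b0: "\<beta> > 0" using l c by (simp add: \<beta>_def)
  have z0: "z > 0" using a0 by (simp add: z_def)
  define E where "E = (\<lambda>t. erlang_density k l t * exp (- c / t))"
  have E0: "E t \<ge> 0" for t using l by (simp add: E_def)
  have [measurable]: "E \<in> borel_measurable borel" unfolding E_def by measurable
  define C where "C = a powr (real (Suc k) / 2) / fact k"
  have C0: "C > 0" using a0 by (simp add: C_def)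
  define g where "g = (\<lambda>s. exp (real (Suc k) * s) * exp (- z * cosh s))"
  have [measurable]: "g \<in> borel_measurable borel" unfolding g_def by measurable
  have g0: "g s \<ge> 0" for s by (simp add: g_def)
  define f where "f = (\<lambda>s. indicator {0..} s * (exp (- z * cosh s) * cosh (real Q * s)))"
  have [measurable]: "f \<in> borel_measurable borel" unfolding f_def by measurable
  define J where "J = (\<integral>\<^sup>+s. ennreal (f s) \<partial>lborel)"
  have "(\<integral>\<^sup>+t. ennreal (E t) \<partial>lborel) = (\<integral>\<^sup>+t. ennreal (E t) * indicator {0<..} t \<partial>lborel)"
  proof (intro nn_integral_cong_AE)
    show "AE t in lborel. ennreal (E t) = ennreal (E t) * indicator {0<..} t"
      using AE_lborel_singleton[of 0] by eventually_elim (auto simp: E_def erlang_density_def split: split_indicator)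
  qed
  also have "\<dots> = (\<integral>\<^sup>+s. ennreal (E (\<beta> * exp s)) * ennreal (\<beta> * exp s) \<partial>lborel)"
    by (rule nn_subst_exp[OF _ b0]) measurable
  also have "\<dots> = (\<integral>\<^sup>+s. ennreal C * ennreal (g s) \<partial>lborel)"
  proof (intro nn_integral_cong)
    fix s
    have "E (\<beta> * exp s) * (\<beta> * exp s) = C * g s"
      using bessel_alg[OF l c, of k s] by (simp add: E_def C_def g_def a_def \<beta>_def z_def)
    then show "ennreal (E (\<beta> * exp s)) * ennreal (\<beta> * exp s) = ennreal C * ennreal (g s)"
      using E0 b0 C0 g0 by (simp add: ennreal_mult[symmetric])
  qed
  also have "\<dots> = ennreal C * (\<integral>\<^sup>+s. ennreal (g s) \<partial>lborel)"
    by (rule nn_integral_cmult) measurable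
  also have "(\<integral>\<^sup>+s. ennreal (g s) \<partial>lborel) = (\<integral>\<^sup>+s. ennreal (g s + g (- s)) * indicator {0..} s \<partial>lborel)"
    by (rule sym_split) (auto simp: g0)
  also have "\<dots> = (\<integral>\<^sup>+s. ennreal 2 * ennreal (f s) \<partial>lborel)"
  proof (intro nn_integral_cong)
    fix s
    have c2: "2 * cosh (real Q * s) = exp (real (Suc k) * s) + exp (- (real (Suc k) * s))"
      by (simp add: cosh_field_def Qk)
    have "g s + g (- s) = (exp (real (Suc k) * s) + exp (- (real (Suc k) * s))) * exp (- z * cosh s)"
      by (simp add: g_def distrib_right)
    also have "\<dots> = 2 * (exp (- z * cosh s) * cosh (real Q * s))"
      by (subst c2[symmetric]) simp
    finally have "g s + g (- s) = 2 * (exp (- z * cosh s) * cosh (real Q * s))" .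
    then show "ennreal (g s + g (- s)) * indicator {0..} s = ennreal 2 * ennreal (f s)"
      by (simp add: f_def ennreal_mult' split: split_indicator)
  qed
  also have "\<dots> = ennreal 2 * J"
    unfolding J_def by (rule nn_integral_cmult) measurable
  finally have main: "(\<integral>\<^sup>+t. ennreal (E t) \<partial>lborel) = ennreal C * (ennreal 2 * J)" .
  have "(\<integral>\<^sup>+t. ennreal (E t) \<partial>lborel) \<le> (\<integral>\<^sup>+t. ennreal (erlang_density k l t) \<partial>lborel)"
  proof (intro nn_integral_mono ennreal_leI)
    fix t
    show "E t \<le> erlang_density k l t"
    proof (cases "t < 0")
      case True then show ?thesis by (simp add: E_def erlang_density_def)
    next
      case False
      then have "exp (- c / t) \<le> 1" using c by simp
      then show ?thesis using l by (simp add: E_def mult_left_le)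
    qed
  qed
  also have "\<dots> = 1"
    using nn_integral_erlang_ith_moment[OF l, of k 0] by simp
  finally have le1: "ennreal C * (ennreal 2 * J) \<le> 1" using main by simp
  have Jfin: "J \<noteq> \<infinity>"
  proof
    assume "J = \<infinity>"
    then have "ennreal C * (ennreal 2 * J) = \<infinity>" using C0 by (simp add: ennreal_mult_eq_top_iff)
    then show False using le1 by (auto simp: top_unique)
  qed
  then obtain r where r: "J = ennreal r" "r \<ge> 0" by (cases J) auto
  have hb: "has_bochner_integral lborel f r"
    by (rule has_bochner_integral_nn_integral) (use r in \<open>auto simp: J_def f_def\<close>)
  have bK: "besselK (real Q) z = r"
    using has_bochner_integral_integral_eq[OF hb]
    by (simp add: besselK_def set_lebesgue_integral_def f_def mult.commute)
  have G: "Gamma (real Q) = fact k"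
    using Gamma_fact[of k, where 'a=real] by (simp add: Qk add.commute)
  have "(\<integral>\<^sup>+t. ennreal (erlang_density (Q - 1) l t * exp (- c / t)) \<partial>lborel) = ennreal C * (ennreal 2 * ennreal r)"
    using main r by (simp add: E_def k_def)
  also have "\<dots> = ennreal (2 / Gamma (real Q) * (l * c) powr (real Q / 2) * besselK (real Q) (2 * sqrt (l * c)))"
  proof -
    have eqr: "C * (2 * r) = 2 / Gamma (real Q) * (l * c) powr (real Q / 2) * besselK (real Q) (2 * sqrt (l * c))"
      using G bK unfolding C_def a_def z_def by (simp add: Qk)
    have "ennreal C * (ennreal 2 * ennreal r) = ennreal (C * (2 * r))"
      using C0 r(2) by (simp add: ennreal_mult)
    then show ?thesis by (simp only: eqr)
  qed
  finally show ?thesis .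
qed

lemma besselK_nonneg: "besselK \<nu> z \<ge> 0"
  unfolding besselK_def set_lebesgue_integral_def
  by (intro integral_nonneg_AE) (auto simp: indicator_def intro!: mult_nonneg_nonneg)

lemma cnM_singleton: "v > 0 \<Longrightarrow> emeasure (cnM v) {c} = 0"
  unfolding cnM_def
  by (subst emeasure_density) (auto intro!: nn_integral_zero' AE_mp[OF AE_lborel_singleton[of c]])

lemma distr_lborel_borel: "distr N borel X = distr N lborel X"
  by (rule distr_cong) auto

lemma block_cdf:
  fixes Q :: nat and \<Omega>sr \<Omega>rd x :: real
    and N :: "'b measure" and g h :: "nat \<Rightarrow> 'b \<Rightarrow> complex"
  assumes Q: "Q \<ge> 1" and sr: "\<Omega>sr > 0" and rd: "\<Omega>rd > 0" and x: "x > 0"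
    and N_prob: "prob_space N"
    and gh_indep: "prob_space.indep_vars N (\<lambda>_. borel)
          (\<lambda>i. case i of Inl k \<Rightarrow> g k | Inr k \<Rightarrow> h k) (Inl ` {1..Q} \<union> Inr ` {1..Q})"
    and g_distr: "\<And>k. k \<in> {1..Q} \<Longrightarrow>
          distributed N lborel (g k) (\<lambda>z. ennreal (cn_density \<Omega>sr z))"
    and h_distr: "\<And>k. k \<in> {1..Q} \<Longrightarrow>
          distributed N lborel (h k) (\<lambda>z. ennreal (cn_density \<Omega>rd z))"
  defines "Bv \<equiv> 2 / Gamma (real Q) * (x / (\<Omega>sr * \<Omega>rd)) powr (real Q / 2)
            * besselK (real Q) (2 * sqrt (x / (\<Omega>sr * \<Omega>rd)))"
  shows "emeasure N {\<omega> \<in> space N. (cmod (\<Sum>k\<in>{1..Q}. g k \<omega> * h k \<omega>))\<^sup>2 \<le> x} = ennreal (1 - Bv)"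
    and "Bv \<le> 1"
proof -
  interpret N: prob_space N by (rule N_prob)
  define K where "K = {1..Q}"
  define Il where "Il = (Inl ` K :: (nat + nat) set)"
  define Ir where "Ir = (Inr ` K :: (nat + nat) set)"
  define I where "I = Il \<union> Ir"
  define Y where "Y = (\<lambda>i. case i of Inl k \<Rightarrow> g k | Inr k \<Rightarrow> h k)"
  define Mi where "Mi = (\<lambda>i::nat+nat. case i of Inl _ \<Rightarrow> cnM \<Omega>sr | Inr _ \<Rightarrow> cnM \<Omega>rd)"
  have finK: "finite K" and finIl: "finite Il" and finIr: "finite Ir" and finI: "finite I"
    by (auto simp: K_def Il_def Ir_def I_def)
  have disj: "Ir \<inter> Il = {}" by (auto simp: Il_def Ir_def)
  have IrIl: "I = Ir \<union> Il" by (auto simp: I_def)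
  have Ine: "I \<noteq> {}" "Ir \<noteq> {}" using Q by (auto simp: I_def Il_def Ir_def K_def)
  have probMi: "prob_space (Mi i)" for i
    by (cases i) (auto simp: Mi_def prob_space_cnM sr rd)
  interpret PS: product_prob_space Mi Ir
    unfolding product_prob_space_def product_sigma_finite_def product_prob_space_axioms_def
    using probMi by (auto simp: prob_space_imp_sigma_finite)
  have sets_Mi[measurable_cong]: "sets (Mi i) = sets borel" for i
    by (cases i) (auto simp: Mi_def)
  have indep: "N.indep_vars (\<lambda>_. borel) Y I"
    using gh_indep by (simp add: Y_def I_def Il_def Ir_def K_def)
  have gm: "g k \<in> borel_measurable N" if "k \<in> K" for k
    using distributed_measurable[OF g_distr[OF that[unfolded K_def]]] by simp
  have hm: "h k \<in> borel_measurable N" if "k \<in> K" for k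
    using distributed_measurable[OF h_distr[OF that[unfolded K_def]]] by simp
  have rvY: "Y i \<in> borel_measurable N" if "i \<in> I" for i
    using that gm hm by (auto simp: I_def Il_def Ir_def Y_def)
  have gd: "distr N borel (g k) = cnM \<Omega>sr" if "k \<in> K" for k
    using distributed_distr_eq_density[OF g_distr[OF that[unfolded K_def]]] by (simp add: cnM_def distr_lborel_borel)
  have hd: "distr N borel (h k) = cnM \<Omega>rd" if "k \<in> K" for k
    using distributed_distr_eq_density[OF h_distr[OF that[unfolded K_def]]] by (simp add: cnM_def distr_lborel_borel)
  have dY: "distr N borel (Y i) = Mi i" if "i \<in> I" for i
    using that gd hd by (auto simp: I_def Il_def Ir_def Y_def Mi_def)
  have joint: "distr N (PiM J (\<lambda>_. borel)) (\<lambda>\<omega>. \<lambda>i\<in>J. Y i \<omega>) = PiM J Mi" if J: "J \<subseteq> I" "J \<noteq> {}" for J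
  proof -
    have "N.indep_vars (\<lambda>_. borel) Y J" using N.indep_vars_subset[OF indep J(1)] .
    then have "distr N (PiM J (\<lambda>_. borel)) (\<lambda>\<omega>. \<lambda>i\<in>J. Y i \<omega>) = PiM J (\<lambda>i. distr N borel (Y i))"
      using N.indep_vars_iff_distr_eq_PiM'[where I=J and M'="\<lambda>_. borel" and X=Y] J rvY by auto
    also have "\<dots> = PiM J Mi"
      using J by (intro PiM_cong) (auto simp: dY)
    finally show ?thesis .
  qed
  define Fi where "Fi = (indicator {z::complex. (cmod z)\<^sup>2 \<le> x} :: complex \<Rightarrow> ennreal)"
  have Fi[measurable]: "Fi \<in> borel_measurable borel" unfolding Fi_def by measurable
  define T where "T = (\<lambda>u::nat+nat \<Rightarrow> complex. \<Sum>j\<in>Ir. (cmod (u j))\<^sup>2)"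
  define \<phi> where "\<phi> = (\<lambda>t::real. ennreal (1 - exp (- x / (\<Omega>sr * t))))"
  have \<phi>m[measurable]: "\<phi> \<in> borel_measurable borel" unfolding \<phi>_def by measurable
  define \<psi> where "\<psi> = (\<lambda>u. if T u = 0 then 1 else \<phi> (T u))"
  have InlI: "Inl k \<in> I" "Inr k \<in> I" if "k \<in> K" for k using that by (auto simp: I_def Il_def Ir_def)
  have GmI: "(\<lambda>f. Fi (\<Sum>k\<in>K. f (Inl k) * f (Inr k))) \<in> borel_measurable (PiM I M')"
    if sM: "\<And>i. sets (M' i) = sets borel" for M' :: "nat+nat \<Rightarrow> complex measure"
  proof -
    have cm: "(\<lambda>f. f i) \<in> borel_measurable (PiM I M')" if "i \<in> I" for i
    proof -
      have "(\<lambda>f. f i) \<in> measurable (PiM I M') (M' i)" by (rule measurable_component_singleton[OF that])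
      then show ?thesis using measurable_cong_sets[OF refl sM[of i]] by blast
    qed
    have "(\<lambda>f. f (Inl k) * f (Inr k)) \<in> borel_measurable (PiM I M')" if "k \<in> K" for k
      using InlI[OF that] by (intro borel_measurable_times cm)
    then have "(\<lambda>f. \<Sum>k\<in>K. f (Inl k) * f (Inr k)) \<in> borel_measurable (PiM I M')"
      by (rule borel_measurable_sum)
    then show ?thesis by (rule measurable_compose) (rule Fi)
  qed
  have GmIb: "(\<lambda>f. Fi (\<Sum>k\<in>K. f (Inl k) * f (Inr k))) \<in> borel_measurable (PiM I Mi)"
    by (rule GmI) (simp add: sets_Mi)
  have GmIb2: "(\<lambda>f. Fi (\<Sum>k\<in>K. f (Inl k) * f (Inr k))) \<in> borel_measurable (PiM I (\<lambda>_. borel))"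
    by (rule GmI) simp
  have S2: "emeasure N {\<omega> \<in> space N. (cmod (\<Sum>k\<in>{1..Q}. g k \<omega> * h k \<omega>))\<^sup>2 \<le> x}
      = (\<integral>\<^sup>+f. Fi (\<Sum>k\<in>K. f (Inl k) * f (Inr k)) \<partial>PiM I Mi)"
  proof -
    define Yv where "Yv = (\<lambda>\<omega>. \<lambda>i\<in>I. Y i \<omega>)"
    have Yvm: "Yv \<in> measurable N (PiM I (\<lambda>_. borel))"
      unfolding Yv_def by (rule measurable_restrict) (rule rvY)
    have Sm: "(\<lambda>\<omega>. \<Sum>k\<in>K. g k \<omega> * h k \<omega>) \<in> borel_measurable N"
      by (intro borel_measurable_sum borel_measurable_times gm hm)
    have nm: "(\<lambda>z::complex. (cmod z)\<^sup>2) \<in> borel_measurable borel" by measurable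
    have Sm2: "(\<lambda>\<omega>. (cmod (\<Sum>k\<in>K. g k \<omega> * h k \<omega>))\<^sup>2) \<in> borel_measurable N"
      using measurable_compose[OF Sm nm] by (simp add: comp_def)
    have setm: "{\<omega> \<in> space N. (cmod (\<Sum>k\<in>K. g k \<omega> * h k \<omega>))\<^sup>2 \<le> x} \<in> sets N"
    proof -
      have "(\<lambda>\<omega>. (cmod (\<Sum>k\<in>K. g k \<omega> * h k \<omega>))\<^sup>2) -` {..x} \<inter> space N \<in> sets N"
        by (rule measurable_sets[OF Sm2]) simp
      also have "(\<lambda>\<omega>. (cmod (\<Sum>k\<in>K. g k \<omega> * h k \<omega>))\<^sup>2) -` {..x} \<inter> space N
          = {\<omega> \<in> space N. (cmod (\<Sum>k\<in>K. g k \<omega> * h k \<omega>))\<^sup>2 \<le> x}" by blast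
      finally show ?thesis .
    qed
    have "(\<integral>\<^sup>+f. Fi (\<Sum>k\<in>K. f (Inl k) * f (Inr k)) \<partial>PiM I Mi)
        = (\<integral>\<^sup>+f. Fi (\<Sum>k\<in>K. f (Inl k) * f (Inr k)) \<partial>distr N (PiM I (\<lambda>_. borel)) Yv)"
      using joint[OF subset_refl Ine(1)] by (simp add: Yv_def)
    also have "\<dots> = (\<integral>\<^sup>+\<omega>. Fi (\<Sum>k\<in>K. Yv \<omega> (Inl k) * Yv \<omega> (Inr k)) \<partial>N)"
      by (rule nn_integral_distr[OF Yvm]) (use GmIb2 in simp)
    also have "\<dots> = (\<integral>\<^sup>+\<omega>. indicator {\<omega> \<in> space N. (cmod (\<Sum>k\<in>K. g k \<omega> * h k \<omega>))\<^sup>2 \<le> x} \<omega> \<partial>N)"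
    proof (rule nn_integral_cong)
      fix \<omega> assume \<omega>: "\<omega> \<in> space N"
      have "(\<Sum>k\<in>K. Yv \<omega> (Inl k) * Yv \<omega> (Inr k)) = (\<Sum>k\<in>K. g k \<omega> * h k \<omega>)"
        by (intro sum.cong refl) (simp add: Yv_def InlI Y_def)
      then show "Fi (\<Sum>k\<in>K. Yv \<omega> (Inl k) * Yv \<omega> (Inr k)) = indicator {\<omega> \<in> space N. (cmod (\<Sum>k\<in>K. g k \<omega> * h k \<omega>))\<^sup>2 \<le> x} \<omega>"
        using \<omega> by (simp add: Fi_def indicator_def)
    qed
    also have "\<dots> = emeasure N {\<omega> \<in> space N. (cmod (\<Sum>k\<in>K. g k \<omega> * h k \<omega>))\<^sup>2 \<le> x}"
      by (rule nn_integral_indicator[OF setm])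
    finally show ?thesis by (simp add: K_def)
  qed
  have S3: "(\<integral>\<^sup>+f. Fi (\<Sum>k\<in>K. f (Inl k) * f (Inr k)) \<partial>PiM I Mi)
      = (\<integral>\<^sup>+u. \<integral>\<^sup>+v. Fi (\<Sum>k\<in>K. merge Ir Il (u, v) (Inl k) * merge Ir Il (u, v) (Inr k)) \<partial>PiM Il Mi \<partial>PiM Ir Mi)"
  proof -
    have m: "(\<lambda>f. Fi (\<Sum>k\<in>K. f (Inl k) * f (Inr k))) \<in> borel_measurable (PiM (Ir \<union> Il) Mi)"
      using GmIb by (simp add: IrIl)
    show ?thesis
      using PS.product_nn_integral_fold[OF disj finIr finIl m] by (simp add: IrIl)
  qed
  have S4: "(\<integral>\<^sup>+v. Fi (\<Sum>k\<in>K. merge Ir Il (u, v) (Inl k) * merge Ir Il (u, v) (Inr k)) \<partial>PiM Il Mi) = \<psi> u" for u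
  proof -
    define bu where "bu = (\<lambda>j::nat+nat. u (Inr (case j of Inl k \<Rightarrow> k | Inr k \<Rightarrow> k)))"
    have "(\<integral>\<^sup>+v. Fi (\<Sum>k\<in>K. merge Ir Il (u, v) (Inl k) * merge Ir Il (u, v) (Inr k)) \<partial>PiM Il Mi)
        = (\<integral>\<^sup>+v. Fi (\<Sum>j\<in>Il. v j * bu j) \<partial>PiM Il (\<lambda>_. cnM \<Omega>sr))"
    proof -
      have PiMeq: "PiM Il Mi = PiM Il (\<lambda>_. cnM \<Omega>sr)"
        by (rule PiM_cong) (auto simp: Il_def Mi_def)
      have "(\<Sum>k\<in>K. merge Ir Il (u, v) (Inl k) * merge Ir Il (u, v) (Inr k)) = (\<Sum>j\<in>Il. v j * bu j)" for v
      proof -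
        have "(\<Sum>k\<in>K. merge Ir Il (u, v) (Inl k) * merge Ir Il (u, v) (Inr k)) = (\<Sum>k\<in>K. v (Inl k) * u (Inr k))"
          by (intro sum.cong refl) (use disj in \<open>auto simp: Il_def Ir_def\<close>)
        also have "\<dots> = (\<Sum>j\<in>Il. v j * bu j)"
          by (simp add: Il_def bu_def sum.reindex inj_on_def)
        finally show ?thesis .
      qed
      then show ?thesis by (simp add: PiMeq)
    qed
    also have "\<dots> = (if (\<Sum>j\<in>Il. (cmod (bu j))\<^sup>2) = 0 then Fi 0
        else \<integral>\<^sup>+z. ennreal (cn_density (\<Omega>sr * (\<Sum>j\<in>Il. (cmod (bu j))\<^sup>2)) z) * Fi z \<partial>lborel)"
      by (rule sum_cn_PiM[OF finIl sr Fi])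
    also have "(\<Sum>j\<in>Il. (cmod (bu j))\<^sup>2) = T u"
      by (simp add: Il_def Ir_def T_def bu_def sum.reindex inj_on_def)
    also have "(if T u = 0 then Fi 0
        else \<integral>\<^sup>+z. ennreal (cn_density (\<Omega>sr * T u) z) * Fi z \<partial>lborel) = \<psi> u"
    proof (cases "T u = 0")
      case True then show ?thesis using x by (simp add: \<psi>_def Fi_def)
    next
      case False
      have "T u \<ge> 0" by (simp add: T_def sum_nonneg)
      then have pos: "\<Omega>sr * T u > 0" using False sr by simp
      have "(\<integral>\<^sup>+z. ennreal (cn_density (\<Omega>sr * T u) z) * Fi z \<partial>lborel) = emeasure (cnM (\<Omega>sr * T u)) {z. (cmod z)\<^sup>2 \<le> x}"
        unfolding cnM_def Fi_def by (subst emeasure_density) auto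
      also have "\<dots> = \<phi> (T u)"
        using cn_radial[OF pos, of x] x by (simp add: \<phi>_def)
      finally show ?thesis using False by (simp add: \<psi>_def)
    qed
    finally show ?thesis .
  qed
  have S5: "(\<integral>\<^sup>+u. \<psi> u \<partial>PiM Ir Mi) = (\<integral>\<^sup>+u. \<phi> (T u) \<partial>PiM Ir Mi)"
  proof (rule nn_integral_cong_AE)
    have i1: "Inr 1 \<in> Ir" using Q by (auto simp: Ir_def K_def)
    define Z where "Z = {u \<in> space (PiM Ir Mi). u (Inr 1) \<in> {0::complex}}"
    have Zs: "Z \<in> sets (PiM Ir Mi)"
    proof -
      have "(\<lambda>u. u (Inr 1)) -` {0} \<inter> space (PiM Ir Mi) \<in> sets (PiM Ir Mi)"
        by (rule measurable_sets[OF measurable_component_singleton[OF i1]]) (simp add: sets_Mi)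
      moreover have "(\<lambda>u. u (Inr 1)) -` {0} \<inter> space (PiM Ir Mi) = Z" by (auto simp: Z_def)
      ultimately show ?thesis by simp
    qed
    have "emeasure (PiM Ir Mi) Z = emeasure (Mi (Inr 1)) {0}"
      unfolding Z_def by (rule PS.emeasure_PiM_Collect_single[OF i1]) (simp add: sets_Mi)
    also have "\<dots> = 0" by (simp add: Mi_def cnM_singleton rd)
    finally have "Z \<in> null_sets (PiM Ir Mi)" using Zs by auto
    moreover have "{u \<in> space (PiM Ir Mi). \<not> T u \<noteq> 0} \<subseteq> Z"
    proof
      fix u assume u: "u \<in> {u \<in> space (PiM Ir Mi). \<not> T u \<noteq> 0}"
      then have "(\<Sum>j\<in>Ir. (cmod (u j))\<^sup>2) = 0" by (simp add: T_def)
      then have "\<forall>j\<in>Ir. (cmod (u j))\<^sup>2 = 0" using finIr by (subst (asm) sum_nonneg_eq_0_iff) auto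
      then have "u (Inr 1) = 0" using i1 by auto
      then show "u \<in> Z" using u by (simp add: Z_def)
    qed
    ultimately show "AE u in PiM Ir Mi. \<psi> u = \<phi> (T u)"
      by (rule AE_I'[THEN AE_mp]) (simp add: \<psi>_def)
  qed
  have S6: "(\<integral>\<^sup>+u. \<phi> (T u) \<partial>PiM Ir Mi) = (\<integral>\<^sup>+\<omega>. \<phi> (\<Sum>j\<in>Ir. (cmod (Y j \<omega>))\<^sup>2) \<partial>N)"
  proof -
    define Yr where "Yr = (\<lambda>\<omega>. \<lambda>i\<in>Ir. Y i \<omega>)"
    have Yrm: "Yr \<in> measurable N (PiM Ir (\<lambda>_. borel))"
      unfolding Yr_def by (rule measurable_restrict) (rule rvY, simp add: I_def)
    have nm: "(\<lambda>z::complex. (cmod z)\<^sup>2) \<in> borel_measurable borel" by measurable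
    have "(\<lambda>u. (cmod (u j))\<^sup>2) \<in> borel_measurable (PiM Ir (\<lambda>_. borel))" if "j \<in> Ir" for j
      using measurable_compose[OF measurable_component_singleton[OF that] nm] by (simp add: comp_def)
    then have "T \<in> borel_measurable (PiM Ir (\<lambda>_. borel))"
      unfolding T_def by (rule borel_measurable_sum)
    then have Tm: "(\<lambda>u. \<phi> (T u)) \<in> borel_measurable (PiM Ir (\<lambda>_. borel))"
      using measurable_compose[OF _ \<phi>m] by (simp add: comp_def)
    have Ir_sub: "Ir \<subseteq> I" by (simp add: I_def)
    have "(\<integral>\<^sup>+u. \<phi> (T u) \<partial>PiM Ir Mi) = (\<integral>\<^sup>+u. \<phi> (T u) \<partial>distr N (PiM Ir (\<lambda>_. borel)) Yr)"
      using joint[OF Ir_sub Ine(2)] by (simp add: Yr_def)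
    also have "\<dots> = (\<integral>\<^sup>+\<omega>. \<phi> (T (Yr \<omega>)) \<partial>N)"
      by (rule nn_integral_distr[OF Yrm]) (use Tm in simp)
    also have "\<dots> = (\<integral>\<^sup>+\<omega>. \<phi> (\<Sum>j\<in>Ir. (cmod (Y j \<omega>))\<^sup>2) \<partial>N)"
      by (intro nn_integral_cong arg_cong[where f=\<phi>]) (simp add: T_def Yr_def)
    finally show ?thesis .
  qed
  have S7: "distributed N lborel (\<lambda>\<omega>. \<Sum>j\<in>Ir. (cmod (Y j \<omega>))\<^sup>2) (erlang_density (Q - 1) (1 / \<Omega>rd))"
  proof -
    have l: "0 < 1 / \<Omega>rd" using rd by simp
    have Ir_sub: "Ir \<subseteq> I" by (simp add: I_def)
    have nm: "(\<lambda>z::complex. (cmod z)\<^sup>2) \<in> borel_measurable borel" by measurable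
    have ind2: "N.indep_vars (\<lambda>_. borel) (\<lambda>j \<omega>. (cmod (Y j \<omega>))\<^sup>2) Ir"
      using N.indep_vars_compose2[OF N.indep_vars_subset[OF indep Ir_sub], of "\<lambda>_ z. (cmod z)\<^sup>2" "\<lambda>_. borel"] nm
      by simp
    have ed: "distributed N lborel (\<lambda>\<omega>. (cmod (Y j \<omega>))\<^sup>2) (erlang_density 0 (1 / \<Omega>rd))" if j: "j \<in> Ir" for j
    proof (rule erlang_distributedI[OF _ l])
      have Ym: "Y j \<in> borel_measurable N" using rvY j by (simp add: I_def)
      show Xm: "(\<lambda>\<omega>. (cmod (Y j \<omega>))\<^sup>2) \<in> borel_measurable N"
        using measurable_compose[OF Ym nm] by (simp add: comp_def)
      fix a :: real assume a: "0 \<le> a"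
      have A: "{z::complex. (cmod z)\<^sup>2 \<le> a} \<in> sets borel" by measurable
      have "emeasure N {\<omega> \<in> space N. (cmod (Y j \<omega>))\<^sup>2 \<le> a} = emeasure (distr N borel (Y j)) {z. (cmod z)\<^sup>2 \<le> a}"
        by (subst emeasure_distr[OF Ym A]) (auto intro: arg_cong[where f="emeasure N"])
      also have "\<dots> = emeasure (cnM \<Omega>rd) {z. (cmod z)\<^sup>2 \<le> a}"
        using dY[of j] j by (simp add: I_def Mi_def Ir_def split: sum.splits) (auto simp: Mi_def)
      also have "\<dots> = ennreal (1 - exp (- a / \<Omega>rd))" by (rule cn_radial[OF rd a])
      also have "\<dots> = ennreal (erlang_CDF 0 (1 / \<Omega>rd) a)" using a by (simp add: erlang_CDF_0)
      finally show "emeasure N {\<omega> \<in> space N. (cmod (Y j \<omega>))\<^sup>2 \<le> a} = ennreal (erlang_CDF 0 (1 / \<Omega>rd) a)" .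
    qed
    have "distributed N lborel (\<lambda>\<omega>. \<Sum>j\<in>Ir. (cmod (Y j \<omega>))\<^sup>2) (erlang_density ((\<Sum>j\<in>Ir. Suc 0) - 1) (1 / \<Omega>rd))"
      by (rule N.erlang_distributed_sum[OF finIr Ine(2) l ed ind2])
    moreover have "(\<Sum>j\<in>Ir. Suc 0) = Q"
      by (simp add: Ir_def K_def card_image)
    ultimately show ?thesis by simp
  qed
  have S8: "(\<integral>\<^sup>+\<omega>. \<phi> (\<Sum>j\<in>Ir. (cmod (Y j \<omega>))\<^sup>2) \<partial>N) = (\<integral>\<^sup>+t. ennreal (erlang_density (Q - 1) (1 / \<Omega>rd) t) * \<phi> t \<partial>lborel)"
    by (rule distributed_nn_integral[OF S7, symmetric]) simp
  have S9: "(\<integral>\<^sup>+t. ennreal (erlang_density (Q - 1) (1 / \<Omega>rd) t) * \<phi> t \<partial>lborel) = ennreal (1 - Bv) \<and> Bv \<le> 1"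
  proof -
    define l where "l = 1 / \<Omega>rd"
    define c where "c = x / \<Omega>sr"
    have l: "l > 0" and c: "c > 0" using rd sr x by (simp_all add: l_def c_def)
    define er where "er = erlang_density (Q - 1) l"
    have er0: "er t \<ge> 0" for t using l by (simp add: er_def)
    have lc: "l * c = x / (\<Omega>sr * \<Omega>rd)" by (simp add: l_def c_def)
    have EB: "(\<integral>\<^sup>+t. ennreal (er t * exp (- c / t)) \<partial>lborel) = ennreal Bv"
      using erlang_bessel[OF l c Q] by (simp add: er_def lc Bv_def)
    have Bv0: "Bv \<ge> 0" unfolding Bv_def
    proof -
      have "Gamma (real Q) > 0" using Q by (intro Gamma_real_pos) simp
      then show "0 \<le> 2 / Gamma (real Q) * (x / (\<Omega>sr * \<Omega>rd)) powr (real Q / 2) * besselK (real Q) (2 * sqrt (x / (\<Omega>sr * \<Omega>rd)))"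
        by (intro mult_nonneg_nonneg divide_nonneg_nonneg besselK_nonneg) auto
    qed
    have pw: "ennreal (er t) * \<phi> t + ennreal (er t * exp (- c / t)) = ennreal (er t)" for t
    proof (cases "t < 0")
      case True then show ?thesis by (simp add: er_def erlang_density_def)
    next
      case False
      have ec: "c / t = x / (\<Omega>sr * t)" by (simp add: c_def)
      have "x / (\<Omega>sr * t) \<ge> 0" using False x sr by simp
      then have e1: "exp (- x / (\<Omega>sr * t)) \<le> 1" by simp
      have "ennreal (er t) * \<phi> t + ennreal (er t * exp (- c / t))
          = ennreal (er t * (1 - exp (- x / (\<Omega>sr * t))) + er t * exp (- x / (\<Omega>sr * t)))"
        using e1 er0[of t] by (simp add: \<phi>_def ec ennreal_mult ennreal_plus)
      also have "\<dots> = ennreal (er t)" by (simp add: algebra_simps)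
      finally show ?thesis .
    qed
    have erm: "er \<in> borel_measurable borel" unfolding er_def by measurable
    have "(\<integral>\<^sup>+t. ennreal (er t) * \<phi> t \<partial>lborel) + ennreal Bv
        = (\<integral>\<^sup>+t. ennreal (er t) * \<phi> t \<partial>lborel) + (\<integral>\<^sup>+t. ennreal (er t * exp (- c / t)) \<partial>lborel)"
      by (simp only: EB)
    also have "\<dots> = (\<integral>\<^sup>+t. ennreal (er t) * \<phi> t + ennreal (er t * exp (- c / t)) \<partial>lborel)"
      by (rule nn_integral_add[symmetric]) (use erm in auto)
    also have "\<dots> = (\<integral>\<^sup>+t. ennreal (er t) \<partial>lborel)"
      by (intro nn_integral_cong) (rule pw)
    also have "\<dots> = 1"
      using nn_integral_erlang_ith_moment[OF l, of "Q - 1" 0] by (simp add: er_def)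
    finally have sum1: "(\<integral>\<^sup>+t. ennreal (er t) * \<phi> t \<partial>lborel) + ennreal Bv = 1" .
    have "ennreal Bv \<le> 1" using sum1 by (metis add.commute le_iff_add)
    then have Bv1: "Bv \<le> 1" by simp
    have "(\<integral>\<^sup>+t. ennreal (er t) * \<phi> t \<partial>lborel) = 1 - ennreal Bv"
      using sum1 by (metis ennreal_add_diff_cancel_right ennreal_neq_top)
    also have "\<dots> = ennreal (1 - Bv)" using Bv0 by (simp add: ennreal_minus[symmetric])
    finally show ?thesis using Bv1 by (simp add: er_def l_def)
  qed
  show "emeasure N {\<omega> \<in> space N. (cmod (\<Sum>k\<in>{1..Q}. g k \<omega> * h k \<omega>))\<^sup>2 \<le> x} = ennreal (1 - Bv)"
    using S2 S3 S4 S5 S6 S8 S9 by simp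
  show "Bv \<le> 1" using S9 by simp
qed

theorem corollary2:
  fixes P Q :: nat
    and \<Omega>sr \<Omega>rd \<rho> R :: real
    and M :: "'a measure" and N :: "'b measure"
    and X :: "nat \<Rightarrow> 'a \<Rightarrow> real"
    and g h :: "nat \<Rightarrow> 'b \<Rightarrow> complex"
  assumes "P \<ge> 1" and "Q \<ge> 1"
    and "\<Omega>sr > 0" and "\<Omega>rd > 0" and "\<rho> > 0" and "R > 0"
    and N_prob: "prob_space N"
    and gh_indep: "prob_space.indep_vars N (\<lambda>_. borel)
          (\<lambda>i. case i of Inl k \<Rightarrow> g k | Inr k \<Rightarrow> h k) (Inl ` {1..Q} \<union> Inr ` {1..Q})"
    and g_distr: "\<And>k. k \<in> {1..Q} \<Longrightarrow>
          distributed N lborel (g k) (\<lambda>z. ennreal (cn_density \<Omega>sr z))"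
    and h_distr: "\<And>k. k \<in> {1..Q} \<Longrightarrow>
          distributed N lborel (h k) (\<lambda>z. ennreal (cn_density \<Omega>rd z))"
    and M_prob: "prob_space M"
    and X_indep: "prob_space.indep_vars M (\<lambda>_. borel) X {1..P}"
    and X_distr: "\<And>p. p \<in> {1..P} \<Longrightarrow>
          distr M borel (X p) = distr N borel (\<lambda>\<omega>. (cmod (\<Sum>k\<in>{1..Q}. g k \<omega> * h k \<omega>))^2)"
  shows "measure M {\<omega> \<in> space M. \<rho> * Max ((\<lambda>p. X p \<omega>) ` {1..P}) \<le> 2 powr R - 1}
       = (1 - 2 / Gamma (real Q) * ((2 powr R - 1) / (\<rho> * \<Omega>sr * \<Omega>rd)) powr (real Q / 2)
            * besselK (real Q) (2 * sqrt ((2 powr R - 1) / (\<rho> * \<Omega>sr * \<Omega>rd)))) ^ P"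
proof -
  interpret M: prob_space M by (rule M_prob)
  interpret N: prob_space N by (rule N_prob)
  define \<gamma> where "\<gamma> = 2 powr R - 1"
  have \<gamma>0: "\<gamma> > 0" using \<open>R > 0\<close> by (simp add: \<gamma>_def)
  define x where "x = \<gamma> / \<rho>"
  have x0: "x > 0" using \<gamma>0 \<open>\<rho> > 0\<close> by (simp add: x_def)
  define Bv where "Bv = 2 / Gamma (real Q) * (x / (\<Omega>sr * \<Omega>rd)) powr (real Q / 2)
            * besselK (real Q) (2 * sqrt (x / (\<Omega>sr * \<Omega>rd)))"
  note bc = block_cdf[OF \<open>Q \<ge> 1\<close> \<open>\<Omega>sr > 0\<close> \<open>\<Omega>rd > 0\<close> x0 N_prob gh_indep g_distr h_distr]
  have cdf: "emeasure N {\<omega> \<in> space N. (cmod (\<Sum>k\<in>{1..Q}. g k \<omega> * h k \<omega>))\<^sup>2 \<le> x} = ennreal (1 - Bv)"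
    using bc(1) by (simp add: Bv_def)
  have Bv1: "Bv \<le> 1" using bc(2) by (simp add: Bv_def)
  define \<Phi> where "\<Phi> = (\<lambda>\<omega>. (cmod (\<Sum>k\<in>{1..Q}. g k \<omega> * h k \<omega>))\<^sup>2)"
  have gm: "g k \<in> borel_measurable N" if "k \<in> {1..Q}" for k
    using distributed_measurable[OF g_distr[OF that]] by simp
  have hm: "h k \<in> borel_measurable N" if "k \<in> {1..Q}" for k
    using distributed_measurable[OF h_distr[OF that]] by simp
  have nm: "(\<lambda>z::complex. (cmod z)\<^sup>2) \<in> borel_measurable borel" by measurable
  have Sm: "(\<lambda>\<omega>. \<Sum>k\<in>{1..Q}. g k \<omega> * h k \<omega>) \<in> borel_measurable N"
    by (intro borel_measurable_sum borel_measurable_times gm hm)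
  have \<Phi>m: "\<Phi> \<in> borel_measurable N"
    using measurable_compose[OF Sm nm] by (simp add: comp_def \<Phi>_def)
  define DM where "DM = distr N borel \<Phi>"
  have DMp: "prob_space DM" unfolding DM_def by (rule N.prob_space_distr[OF \<Phi>m])
  have DMx: "emeasure DM {..x} = ennreal (1 - Bv)"
  proof -
    have "emeasure DM {..x} = emeasure N (\<Phi> -` {..x} \<inter> space N)"
      unfolding DM_def by (rule emeasure_distr[OF \<Phi>m]) simp
    also have "\<Phi> -` {..x} \<inter> space N = {\<omega> \<in> space N. (cmod (\<Sum>k\<in>{1..Q}. g k \<omega> * h k \<omega>))\<^sup>2 \<le> x}"
      by (auto simp: \<Phi>_def)
    finally show ?thesis using cdf by simp
  qed
  have Xm: "X p \<in> borel_measurable M" if "p \<in> {1..P}" for p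
    using X_indep that by (simp add: M.indep_vars_def)
  have dX: "distr M borel (X p) = DM" if "p \<in> {1..P}" for p
    using X_distr[OF that] by (simp add: DM_def \<Phi>_def)
  define Xv where "Xv = (\<lambda>\<omega>. \<lambda>p\<in>{1..P}. X p \<omega>)"
  have Pne: "{1..P} \<noteq> {}" using \<open>P \<ge> 1\<close> by simp
  have Xvm: "Xv \<in> measurable M (PiM {1..P} (\<lambda>_. borel))"
    unfolding Xv_def by (rule measurable_restrict) (rule Xm)
  have jointM: "distr M (PiM {1..P} (\<lambda>_. borel)) Xv = PiM {1..P} (\<lambda>_. DM)"
  proof -
    have "distr M (PiM {1..P} (\<lambda>_. borel)) Xv = PiM {1..P} (\<lambda>p. distr M borel (X p))"
      using M.indep_vars_iff_distr_eq_PiM'[where I="{1..P}" and M'="\<lambda>_. borel" and X=X] Pne Xm X_indep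
      by (simp add: Xv_def)
    also have "\<dots> = PiM {1..P} (\<lambda>_. DM)"
      by (intro PiM_cong) (auto simp: dX)
    finally show ?thesis .
  qed
  interpret DMP: product_sigma_finite "\<lambda>_::nat. DM"
    unfolding product_sigma_finite_def using DMp by (simp add: prob_space_imp_sigma_finite)
  have sets_DM: "sets DM = sets borel" by (simp add: DM_def)
  have seteq: "{\<omega> \<in> space M. \<rho> * Max ((\<lambda>p. X p \<omega>) ` {1..P}) \<le> 2 powr R - 1}
      = Xv -` (PiE {1..P} (\<lambda>_. {..x})) \<inter> space M"
  proof -
    have "\<rho> * Max ((\<lambda>p. X p \<omega>) ` {1..P}) \<le> 2 powr R - 1 \<longleftrightarrow> (\<forall>p\<in>{1..P}. X p \<omega> \<le> x)" for \<omega>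
    proof -
      have "\<rho> * Max ((\<lambda>p. X p \<omega>) ` {1..P}) \<le> 2 powr R - 1 \<longleftrightarrow> Max ((\<lambda>p. X p \<omega>) ` {1..P}) \<le> x"
        using \<open>\<rho> > 0\<close> by (simp add: x_def \<gamma>_def field_simps)
      also have "\<dots> \<longleftrightarrow> (\<forall>p\<in>{1..P}. X p \<omega> \<le> x)"
        using Pne by (simp add: Max_le_iff)
      finally show ?thesis .
    qed
    then show ?thesis by (auto simp: Xv_def PiE_iff)
  qed
  have "emeasure M {\<omega> \<in> space M. \<rho> * Max ((\<lambda>p. X p \<omega>) ` {1..P}) \<le> 2 powr R - 1}
      = emeasure (distr M (PiM {1..P} (\<lambda>_. borel)) Xv) (PiE {1..P} (\<lambda>_. {..x}))"
  proof -
    have "PiE {1..P} (\<lambda>_. {..x}) \<in> sets (PiM {1..P} (\<lambda>_. borel :: real measure))"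
      by (rule sets_PiM_I_finite) auto
    then show ?thesis unfolding seteq by (rule emeasure_distr[OF Xvm, symmetric])
  qed
  also have "\<dots> = emeasure (PiM {1..P} (\<lambda>_. DM)) (PiE {1..P} (\<lambda>_. {..x}))"
    by (simp only: jointM)
  also have "\<dots> = (\<Prod>p\<in>{1..P}. emeasure DM {..x})"
    by (rule DMP.emeasure_PiM) (auto simp: sets_DM)
  also have "\<dots> = ennreal ((1 - Bv) ^ P)"
    using Bv1 by (simp add: DMx ennreal_power)
  finally have em: "emeasure M {\<omega> \<in> space M. \<rho> * Max ((\<lambda>p. X p \<omega>) ` {1..P}) \<le> 2 powr R - 1} = ennreal ((1 - Bv) ^ P)" .
  have xe: "x / (\<Omega>sr * \<Omega>rd) = (2 powr R - 1) / (\<rho> * \<Omega>sr * \<Omega>rd)"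
    using \<open>\<rho> > 0\<close> by (simp add: x_def \<gamma>_def field_simps)
  have "measure M {\<omega> \<in> space M. \<rho> * Max ((\<lambda>p. X p \<omega>) ` {1..P}) \<le> 2 powr R - 1} = (1 - Bv) ^ P"
    using em Bv1 by (simp add: measure_def)
  then show ?thesis by (simp add: Bv_def xe)
qed

end
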